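(* Let $n,k \in \mathbb{N}$ with $k\leq n/2$. Then the binomial language $B_{n,k}=\{w\in\{0,1\}^n : |w|_1=k\}$ requires regular expressions of length $\mathrm{rpn}(B_{n,k}) \geq n k^{\Omega(\log k)}$.
   Context: $|w|_1$ is the number of ones in $w$. Regular expressions are built from $\epsilon$ and letters by union and concatenation (no $\emptyset$); $\mathrm{rpn}(L)$ is the minimum number of syntax-tree nodes of an expression describing $L$. Logarithms are base 2. *)

theory Defs
  imports Complex_Main
begin

text \<open>Regular expressions over the binary alphabet {0,1} (letters are booleans,
  True = 1), built from epsilon and letters by union and concatenation only.\<close>
datatype rexp = Eps | Letter bool | Plus rexp rexp | Times rexp rexp

fun lang :: "rexp \<Rightarrow> bool list set" where
  "lang Eps = {[]}"
| "lang (Letter a) = {[a]}"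
| "lang (Plus r s) = lang r \<union> lang s"
| "lang (Times r s) = {u @ v | u v. u \<in> lang r \<and> v \<in> lang s}"

fun nodes :: "rexp \<Rightarrow> nat" where
  "nodes Eps = 1"
| "nodes (Letter a) = 1"
| "nodes (Plus r s) = nodes r + nodes s + 1"
| "nodes (Times r s) = nodes r + nodes s + 1"

definition rpn :: "bool list set \<Rightarrow> nat" where
  "rpn L = (LEAST m. \<exists>r. lang r = L \<and> nodes r = m)"

definition count_ones :: "bool list \<Rightarrow> nat" where
  "count_ones w = length (filter (\<lambda>x. x) w)"

definition binomial_lang :: "nat \<Rightarrow> nat \<Rightarrow> bool list set" where
  "binomial_lang n k = {w. length w = n \<and> count_ones w = k}"

end

theory Submission
  imports Defs "HOL-Real_Asymp.Real_Asymp"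
begin


definition BL :: "nat \<Rightarrow> nat \<Rightarrow> bool list set" where
  "BL m j = {w. length w = m \<and> count_ones w = j}"

lemma count_ones_append[simp]: "count_ones (u @ v) = count_ones u + count_ones v"
  by (simp add: count_ones_def)

lemma count_ones_Cons[simp]: "count_ones (a # w) = (if a then Suc (count_ones w) else count_ones w)"
  by (simp add: count_ones_def)

lemma count_ones_Nil[simp]: "count_ones [] = 0"
  by (simp add: count_ones_def)

lemma count_ones_le: "count_ones w \<le> length w"
  by (simp add: count_ones_def)

lemma lang_finite: "finite (lang r)"
proof (induction r)
  case (Times r s)
  have "lang (Times r s) = (\<lambda>(u,v). u @ v) ` (lang r \<times> lang s)" by auto
  then show ?case using Times by simp
qed auto

lemma lang_nonempty: "lang r \<noteq> {}"
  by (induction r) auto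

lemma BL_Suc: "BL (Suc m) j = (\<lambda>w. False # w) ` BL m j \<union> (if j = 0 then {} else (\<lambda>w. True # w) ` BL m (j - 1))"
proof (intro set_eqI iffI)
  fix w assume "w \<in> BL (Suc m) j"
  then obtain a v where w: "w = a # v" and "length v = m" and c: "count_ones w = j"
    unfolding BL_def by (cases w) auto
  then show "w \<in> (\<lambda>w. False # w) ` BL m j \<union> (if j = 0 then {} else (\<lambda>w. True # w) ` BL m (j - 1))"
    by (cases a) (auto simp: BL_def)
next
  fix w assume "w \<in> (\<lambda>w. False # w) ` BL m j \<union> (if j = 0 then {} else (\<lambda>w. True # w) ` BL m (j - 1))"
  then show "w \<in> BL (Suc m) j" by (auto simp: BL_def split: if_splits)
qed

lemma BL_finite: "finite (BL m j)"
proof -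
  have "BL m j \<subseteq> {w. set w \<subseteq> UNIV \<and> length w = m}" by (auto simp: BL_def)
  moreover have "finite {w. set w \<subseteq> (UNIV::bool set) \<and> length w = m}"
    by (rule finite_lists_length_eq) simp
  ultimately show ?thesis by (rule finite_subset)
qed

lemma card_BL: "card (BL m j) = m choose j"
proof (induction m arbitrary: j)
  case 0
  have "BL 0 j = (if j = 0 then {[]} else {})" by (auto simp: BL_def)
  then show ?case by simp
next
  case (Suc m)
  show ?case
  proof (cases j)
    case 0
    then show ?thesis using Suc[of 0] by (simp add: BL_Suc card_image inj_on_def)
  next
    case (Suc i)
    have d: "(\<lambda>w. False # w) ` BL m j \<inter> (\<lambda>w. True # w) ` BL m i = {}" by auto
    have "card (BL (Suc m) j) = card ((\<lambda>w. False # w) ` BL m j) + card ((\<lambda>w. True # w) ` BL m i)"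
      unfolding BL_Suc using Suc d by (simp add: card_Un_disjoint BL_finite)
    also have "\<dots> = (m choose j) + (m choose i)"
      using Suc.IH by (simp add: card_image inj_on_def)
    finally show ?thesis using Suc by simp
  qed
qed

lemma card_times:
  assumes "A \<subseteq> BL m1 j1" "finite A" "finite B"
  shows "card {u @ v | u v. u \<in> A \<and> v \<in> B} = card A * card B"
proof -
  have e: "{u @ v | u v. u \<in> A \<and> v \<in> B} = (\<lambda>(u,v). u @ v) ` (A \<times> B)" by auto
  have "inj_on (\<lambda>(u,v). u @ v) (A \<times> B)"
  proof (rule inj_onI, clarsimp)
    fix u v u' v' assume "u \<in> A" "v \<in> B" "u' \<in> A" "v' \<in> B" "u @ v = u' @ v'"
    moreover have "length u = length u'" using assms(1) \<open>u \<in> A\<close> \<open>u' \<in> A\<close> by (auto simp: BL_def)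
    ultimately show "u = u' \<and> v = v'" by auto
  qed
  then show ?thesis unfolding e by (simp add: card_image card_cartesian_product)
qed

lemma times_split:
  assumes "lang (Times r s) \<subseteq> BL m j"
  shows "\<exists>m1 j1 m2 j2. lang r \<subseteq> BL m1 j1 \<and> lang s \<subseteq> BL m2 j2 \<and> m = m1 + m2 \<and> j = j1 + j2"
proof -
  obtain u0 where u0: "u0 \<in> lang r" using lang_nonempty by blast
  obtain v0 where v0: "v0 \<in> lang s" using lang_nonempty by blast
  have uv: "u @ v \<in> BL m j" if "u \<in> lang r" "v \<in> lang s" for u v using assms that by auto
  have "lang r \<subseteq> BL (length u0) (count_ones u0)"
  proof
    fix u assume "u \<in> lang r"
    from uv[OF this v0] uv[OF u0 v0] show "u \<in> BL (length u0) (count_ones u0)" by (auto simp: BL_def)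
  qed
  moreover have "lang s \<subseteq> BL (length v0) (count_ones v0)"
  proof
    fix v assume "v \<in> lang s"
    from uv[OF u0 this] uv[OF u0 v0] show "v \<in> BL (length v0) (count_ones v0)" by (auto simp: BL_def)
  qed
  moreover have "m = length u0 + length v0 \<and> j = count_ones u0 + count_ones v0"
    using uv[OF u0 v0] by (auto simp: BL_def)
  ultimately show ?thesis by blast
qed

fun wrx :: "bool list \<Rightarrow> rexp" where
  "wrx [] = Eps"
| "wrx (a # w) = Times (Letter a) (wrx w)"

lemma lang_wrx: "lang (wrx w) = {w}"
  by (induction w) auto

lemma expressible: "finite S \<Longrightarrow> S \<noteq> {} \<Longrightarrow> \<exists>r. lang r = S"
proof (induction S rule: finite_ne_induct)
  case (singleton x) then show ?case using lang_wrx by blast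
next
  case (insert x F)
  then obtain r where "lang r = F" by blast
  then have "lang (Plus (wrx x) r) = insert x F" by (simp add: lang_wrx)
  then show ?case by blast
qed



lemma BL_nonempty_le: "lang r \<subseteq> BL m j \<Longrightarrow> j \<le> m"
  using lang_nonempty[of r] count_ones_le by (fastforce simp: BL_def)

lemma main_ind:
  fixes G :: "nat \<Rightarrow> nat \<Rightarrow> real"
  assumes G00: "G 0 0 \<le> 1" and G1: "\<And>j. G 1 j \<le> 1" and Gnn: "\<And>m j. G m j \<ge> 0"
    and key: "\<And>m1 j1 m2 j2. j1 \<le> m1 \<Longrightarrow> j2 \<le> m2 \<Longrightarrow>
       G (m1+m2) (j1+j2) * real (m1 choose j1) * real (m2 choose j2) \<le> (G m1 j1 + G m2 j2 + 1) * real ((m1+m2) choose (j1+j2))"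
  shows "lang r \<subseteq> BL m j \<Longrightarrow> G m j * card (lang r) \<le> real (nodes r) * (m choose j)"
proof (induction r arbitrary: m j)
  case Eps
  then have "m = 0" "j = 0" by (auto simp: BL_def)
  then show ?case using G00 by simp
next
  case (Letter a)
  then have "m = 1" "j \<le> 1" by (auto simp: BL_def split: if_splits)
  moreover have "(1::nat) choose j = 1" using \<open>j \<le> 1\<close> by (cases j) auto
  ultimately show ?case using G1[of j] by simp
next
  case (Plus r s)
  have "lang r \<subseteq> BL m j" "lang s \<subseteq> BL m j" using Plus.prems by auto
  then have ir: "G m j * card (lang r) \<le> real (nodes r) * (m choose j)"
    and is': "G m j * card (lang s) \<le> real (nodes s) * (m choose j)" using Plus.IH by auto
  have "card (lang (Plus r s)) \<le> card (lang r) + card (lang s)" by (simp add: card_Un_le)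
  then have "G m j * card (lang (Plus r s)) \<le> G m j * (card (lang r) + card (lang s))"
    using Gnn by (intro mult_left_mono) (simp_all only: of_nat_add[symmetric] of_nat_le_iff)
  also have "\<dots> \<le> real (nodes r) * (m choose j) + real (nodes s) * (m choose j)"
    using ir is' by (simp add: distrib_left)
  also have "\<dots> \<le> real (nodes (Plus r s)) * (m choose j)" by (simp add: algebra_simps)
  finally show ?case .
next
  case (Times r s)
  obtain m1 j1 m2 j2 where sp: "lang r \<subseteq> BL m1 j1" "lang s \<subseteq> BL m2 j2" "m = m1 + m2" "j = j1 + j2"
    using times_split[OF Times.prems] by blast
  have le1: "j1 \<le> m1" and le2: "j2 \<le> m2" using sp BL_nonempty_le by auto
  define cA where "cA = real (card (lang r))"
  define cB where "cB = real (card (lang s))"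
  define C1 where "C1 = real (m1 choose j1)"
  define C2 where "C2 = real (m2 choose j2)"
  define C where "C = real (m choose j)"
  define na where "na = real (nodes r)"
  define nb where "nb = real (nodes s)"
  have cA: "cA \<le> C1" unfolding cA_def C1_def
    using card_mono[OF BL_finite sp(1)] card_BL by simp
  have cB: "cB \<le> C2" unfolding cB_def C2_def
    using card_mono[OF BL_finite sp(2)] card_BL by simp
  have C1p: "C1 > 0" and C2p: "C2 > 0" using le1 le2 by (auto simp: C1_def C2_def)
  have cAn: "cA \<ge> 0" "cB \<ge> 0" "na \<ge> 0" "nb \<ge> 0" "C \<ge> 0" by (auto simp: cA_def cB_def na_def nb_def C_def)
  have ihr: "G m1 j1 * cA \<le> na * C1" using Times.IH(1)[OF sp(1)] by (simp add: cA_def na_def C1_def)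
  have ihs: "G m2 j2 * cB \<le> nb * C2" using Times.IH(2)[OF sp(2)] by (simp add: cB_def nb_def C2_def)
  have k: "G m j * C1 * C2 \<le> (G m1 j1 + G m2 j2 + 1) * C"
    using key[OF le1 le2] sp by (simp add: C1_def C2_def C_def)
  have card: "card (lang (Times r s)) = card (lang r) * card (lang s)"
    using card_times[OF sp(1) lang_finite lang_finite] by simp
  have a: "G m1 j1 * cA * cB \<le> na * C1 * C2"
  proof -
    have "G m1 j1 * cA * cB \<le> na * C1 * cB" using ihr cAn by (intro mult_right_mono) auto
    also have "\<dots> \<le> na * C1 * C2" using cB cAn C1p by (intro mult_left_mono) auto
    finally show ?thesis .
  qed
  have b: "G m2 j2 * cA * cB \<le> nb * C1 * C2"
  proof -
    have "G m2 j2 * cA * cB = G m2 j2 * cB * cA" by simp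
    also have "\<dots> \<le> nb * C2 * cA" using ihs cAn by (intro mult_right_mono) auto
    also have "\<dots> \<le> nb * C2 * C1" using cA cAn C2p by (intro mult_left_mono) auto
    finally show ?thesis by (simp add: mult.commute mult.left_commute)
  qed
  have c: "cA * cB \<le> C1 * C2" using cA cB cAn by (intro mult_mono) auto
  have "(G m j * cA * cB) * (C1 * C2) = (G m j * C1 * C2) * (cA * cB)" by simp
  also have "\<dots> \<le> ((G m1 j1 + G m2 j2 + 1) * C) * (cA * cB)"
    using k cAn by (intro mult_right_mono) auto
  also have "\<dots> = (G m1 j1 * cA * cB + G m2 j2 * cA * cB + cA * cB) * C" by (simp add: algebra_simps)
  also have "\<dots> \<le> (na * C1 * C2 + nb * C1 * C2 + C1 * C2) * C"
    using a b c cAn by (intro mult_right_mono) auto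
  also have "\<dots> = ((na + nb + 1) * C) * (C1 * C2)" by (simp add: algebra_simps)
  finally have "G m j * cA * cB \<le> (na + nb + 1) * C"
    using C1p C2p by (simp add: mult_le_cancel_right)
  then show ?case using card by (simp add: cA_def cB_def na_def nb_def C_def algebra_simps)
qed



lemma binom_up: "(n choose Suc k) * Suc k = (n choose k) * (n - k)"
  by (metis binomial_absorb_comp binomial_absorption mult.commute)

lemma binom_up_real: "real (n choose Suc k) * (real k + 1) = real (n choose k) * (real n - real k)" if "k \<le> n"
proof -
  have "real ((n choose Suc k) * Suc k) = real ((n choose k) * (n - k))" by (simp only: binom_up)
  then show ?thesis using that by (simp add: of_nat_diff algebra_simps)
qed

lemma vsum_le:
  assumes "S \<subseteq> {..j}"
  shows "(\<Sum>k\<in>S. real (m1 choose k) * real (m2 choose (j - k))) \<le> real ((m1 + m2) choose j)"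
proof -
  have "(\<Sum>k\<in>S. real (m1 choose k) * real (m2 choose (j - k))) \<le> (\<Sum>k\<le>j. real (m1 choose k) * real (m2 choose (j - k)))"
    using assms by (intro sum_mono2) auto
  also have "\<dots> = real (\<Sum>k\<le>j. (m1 choose k) * (m2 choose (j - k)))" by simp
  also have "\<dots> = real ((m1 + m2) choose j)" by (simp only: vandermonde)
  finally show ?thesis .
qed

lemma single_le: "i \<le> j \<Longrightarrow> real (m1 choose i) * real (m2 choose (j - i)) \<le> real ((m1 + m2) choose j)"
  using vsum_le[of "{i}" j m1 m2] by simp

lemma pair_le: "i < k \<Longrightarrow> k \<le> j \<Longrightarrow> real (m1 choose i) * real (m2 choose (j - i)) + real (m1 choose k) * real (m2 choose (j - k)) \<le> real ((m1 + m2) choose j)"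
  using vsum_le[of "{i,k}" j m1 m2] by simp



lemma fac_ge:
  fixes x M D d :: real
  assumes "M \<le> x" "d + 1 \<le> D" "D \<le> M" "0 \<le> d"
  shows "(M + 1 - D) / (M + D) \<le> (x - d) / (x + d + 1)"
proof -
  have p1: "M + D > 0" "x + d + 1 > 0" using assms by auto
  have "(M + 1 - D) * (x + d + 1) \<le> (x - d) * (M + D)"
  proof -
    have "(x - d) * (M + D) - (M + 1 - D) * (x + d + 1) = (x - M) * (2*D - 1) + (D - 1 - d) * (2*M + 1)"
      by (simp add: algebra_simps)
    moreover have "(x - M) * (2*D - 1) \<ge> 0" using assms by auto
    moreover have "(D - 1 - d) * (2*M + 1) \<ge> 0" using assms by auto
    ultimately show ?thesis by linarith
  qed
  then show ?thesis using p1 by (simp add: divide_simps)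
qed

lemma pb:
  fixes x y D M d :: nat
  assumes "M \<le> x" "M \<le> y" "D \<le> M" "1 \<le> M" "d \<le> D"
  shows "real ((x+y) choose x) ^ 2 * ((real M + 1 - real D) / (real M + real D)) ^ (2*d)
         \<le> real ((x+y) choose (x+d)) * real ((x+y) choose (x-d))"
  using assms(5)
proof (induction d)
  case 0
  then show ?case by (simp add: power2_eq_square)
next
  case (Suc d)
  define r where "r = (real M + 1 - real D) / (real M + real D)"
  have r0: "r \<ge> 0" using assms unfolding r_def by auto
  have dD: "d + 1 \<le> D" using Suc by simp
  have ih: "real ((x+y) choose x) ^ 2 * r ^ (2*d) \<le> real ((x+y) choose (x+d)) * real ((x+y) choose (x-d))"
    using Suc by (simp add: r_def)
  have e1: "real ((x+y) choose Suc (x+d)) * (real (x+d) + 1) = real ((x+y) choose (x+d)) * (real y - real d)"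
    using binom_up_real[of "x+d" "x+y"] dD assms by (simp add: algebra_simps)
  have xd: "x - d = Suc (x - Suc d)" using dD assms by simp
  have e2: "real ((x+y) choose (x - d)) * (real (x - Suc d) + 1) = real ((x+y) choose (x - Suc d)) * (real (x+y) - real (x - Suc d))"
    using binom_up_real[of "x - Suc d" "x+y"] xd by simp
  have xsd: "real (x - Suc d) = real x - real d - 1" using dD assms by (simp add: of_nat_diff)
  have f1: "r \<le> (real y - real d) / (real y + real d + 1)"
    unfolding r_def by (rule fac_ge) (use assms dD in auto)
  have f2: "r \<le> (real x - real d) / (real x + real d + 1)"
    unfolding r_def by (rule fac_ge) (use assms dD in auto)
  have A: "real ((x+y) choose Suc (x+d)) = real ((x+y) choose (x+d)) * ((real y - real d) / (real x + real d + 1))"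
    using e1 by (simp add: field_simps)
  have B: "real ((x+y) choose (x - Suc d)) = real ((x+y) choose (x - d)) * ((real x - real d) / (real y + real d + 1))"
    using e2 xsd by (simp add: field_simps)
  have "real ((x+y) choose x) ^ 2 * r ^ (2 * Suc d) = (real ((x+y) choose x) ^ 2 * r ^ (2*d)) * (r * r)"
    by (simp add: power_add power2_eq_square algebra_simps)
  also have "\<dots> \<le> (real ((x+y) choose (x+d)) * real ((x+y) choose (x-d))) *
      (((real y - real d) / (real x + real d + 1)) * ((real x - real d) / (real y + real d + 1)))"
  proof (rule mult_mono[OF ih])
    have "r * r \<le> ((real y - real d) / (real y + real d + 1)) * ((real x - real d) / (real x + real d + 1))"
      using f1 f2 r0 by (intro mult_mono) auto
    then show "r * r \<le> ((real y - real d) / (real x + real d + 1)) * ((real x - real d) / (real y + real d + 1))"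
      by (simp add: field_simps)
  qed (use r0 in auto)
  also have "\<dots> = real ((x+y) choose (x + Suc d)) * real ((x+y) choose (x - Suc d))"
    using A B by simp
  finally show ?case by (simp add: r_def)
qed



lemma amgm_step:
  fixes p q a k :: real
  assumes "p \<ge> 0" "q \<ge> 0" "a \<ge> 0" "k \<ge> 0" "k^2 * a^2 / 4 \<le> p * q"
  shows "k * a \<le> p + q"
proof -
  have "(k * a)^2 \<le> (p + q)^2"
  proof -
    have "(k*a)^2 = 4 * (k^2 * a^2 / 4)" by (simp add: power_mult_distrib)
    also have "\<dots> \<le> 4 * (p * q)" using assms by simp
    also have "\<dots> \<le> (p + q)^2"
    proof -
      have "(p+q)^2 - 4*(p*q) = (p-q)^2" by (simp add: power2_eq_square algebra_simps)
      then show ?thesis using zero_le_power2[of "p-q"] by linarith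
    qed
    finally show ?thesis .
  qed
  then show ?thesis by (rule power2_le_imp_le) (simp add: assms(1,2))
qed

lemma window_sum:
  fixes a :: "nat \<Rightarrow> real" and k :: real
  assumes nn: "\<And>n. a n \<ge> 0" and DI: "D \<le> i"
    and pairs: "\<And>d. 1 \<le> d \<Longrightarrow> d \<le> D \<Longrightarrow> k * a i \<le> a (i + d) + a (i - d)"
  shows "(1 + k * real D) * a i \<le> (\<Sum>n\<in>{i - D..i + D}. a n)"
  using DI pairs
proof (induction D)
  case 0
  then show ?case by simp
next
  case (Suc D)
  have ih: "(1 + k * real D) * a i \<le> (\<Sum>n\<in>{i - D..i + D}. a n)" using Suc by auto
  have set: "{i - Suc D..i + Suc D} = insert (i - Suc D) (insert (i + Suc D) {i - D..i + D})"
    using Suc.prems by auto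
  have nin: "i - Suc D \<notin> insert (i + Suc D) {i - D..i + D}" using Suc.prems by auto
  have nin2: "i + Suc D \<notin> {i - D..i + D}" by auto
  have "(\<Sum>n\<in>{i - Suc D..i + Suc D}. a n) = a (i - Suc D) + (a (i + Suc D) + (\<Sum>n\<in>{i - D..i + D}. a n))"
    unfolding set using nin nin2 by (simp add: sum.insert)
  moreover have "k * a i \<le> a (i + Suc D) + a (i - Suc D)" using Suc.prems(2)[of "Suc D"] by simp
  ultimately show ?case using ih by (simp add: algebra_simps)
qed

lemma central:
  fixes x1 y1 x2 y2 M D :: nat and k :: real
  assumes "M \<le> x1" "M \<le> y1" "M \<le> x2" "M \<le> y2" "D \<le> M" "1 \<le> M" "k \<ge> 0"
    and rk: "k^2 / 4 \<le> ((real M + 1 - real D) / (real M + real D)) ^ (4*D)"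
  shows "(1 + k * real D) * (real ((x1+y1) choose x1) * real ((x2+y2) choose x2))
          \<le> real ((x1+y1+x2+y2) choose (x1+x2))"
proof (cases "D = 0")
  case True
  have "real ((x1+y1) choose x1) * real ((x2+y2) choose (x1 + x2 - x1)) \<le> real (((x1+y1) + (x2+y2)) choose (x1+x2))"
    by (rule single_le) simp
  then show ?thesis using True by (simp add: add.assoc)
next
  case False
  define r where "r = (real M + 1 - real D) / (real M + real D)"
  have Dp: "real D \<ge> 1" using False by simp
  have MD: "real D \<le> real M" using assms by simp
  have r0: "0 \<le> r" unfolding r_def using MD by (intro divide_nonneg_nonneg) auto
  have r1: "r \<le> 1" unfolding r_def using MD Dp by (subst divide_le_eq_1) auto
  define a where "a n = real ((x1+y1) choose n) * real ((x2+y2) choose (x1 + x2 - n))" for n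
  have ai: "a x1 = real ((x1+y1) choose x1) * real ((x2+y2) choose x2)" by (simp add: a_def)
  have pairs: "k * a x1 \<le> a (x1 + d) + a (x1 - d)" if d: "1 \<le> d" "d \<le> D" for d
  proof -
    have b1: "real ((x1+y1) choose x1) ^ 2 * r ^ (2*d) \<le> real ((x1+y1) choose (x1+d)) * real ((x1+y1) choose (x1-d))"
      unfolding r_def by (rule pb) (use assms d in auto)
    have b2: "real ((x2+y2) choose x2) ^ 2 * r ^ (2*d) \<le> real ((x2+y2) choose (x2+d)) * real ((x2+y2) choose (x2-d))"
      unfolding r_def by (rule pb) (use assms d in auto)
    have e1: "a (x1 + d) = real ((x1+y1) choose (x1+d)) * real ((x2+y2) choose (x2-d))"
      by (simp add: a_def)
    have e2: "a (x1 - d) = real ((x1+y1) choose (x1-d)) * real ((x2+y2) choose (x2+d))"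
      using d assms by (simp add: a_def)
    have "a x1 ^ 2 * r ^ (4*D) \<le> a x1 ^ 2 * r ^ (4*d)"
      using d r0 r1 by (intro mult_left_mono power_decreasing) auto
    also have "\<dots> = (real ((x1+y1) choose x1) ^ 2 * r ^ (2*d)) * (real ((x2+y2) choose x2) ^ 2 * r ^ (2*d))"
    proof -
      have "4*d = 2*d + 2*d" by simp
      then have "r ^ (4*d) = r^(2*d) * r^(2*d)" by (simp only: power_add)
      then show ?thesis by (simp add: ai power_mult_distrib)
    qed
    also have "\<dots> \<le> (real ((x1+y1) choose (x1+d)) * real ((x1+y1) choose (x1-d))) *
                   (real ((x2+y2) choose (x2+d)) * real ((x2+y2) choose (x2-d)))"
      by (rule mult_mono[OF b1 b2]) (use r0 in auto)
    also have "\<dots> = a (x1 + d) * a (x1 - d)" using e1 e2 by simp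
    finally have "a x1 ^ 2 * r ^ (4*D) \<le> a (x1 + d) * a (x1 - d)" .
    moreover have "k^2 * a x1 ^2 / 4 \<le> a x1 ^ 2 * r ^ (4*D)"
      using rk unfolding r_def[symmetric]
      by (metis mult.commute times_divide_eq_right mult_left_mono zero_le_power2)
    ultimately have P: "k^2 * a x1 ^2 / 4 \<le> a (x1 + d) * a (x1 - d)" by linarith
    show ?thesis by (rule amgm_step[OF _ _ _ _ P]) (use assms in \<open>auto simp: a_def\<close>)
  qed
  have "(1 + k * real D) * a x1 \<le> (\<Sum>n\<in>{x1 - D..x1 + D}. a n)"
    by (rule window_sum) (use pairs assms in \<open>auto simp: a_def\<close>)
  also have "\<dots> \<le> real ((x1+y1+x2+y2) choose (x1+x2))"
    unfolding a_def using vsum_le[of "{x1 - D..x1 + D}" "x1+x2" "x1+y1" "x2+y2"] assms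
    by (simp add: add.assoc)
  finally show ?thesis using ai by simp
qed



lemma two_neighbor:
  fixes x1 y1 x2 y2 :: nat
  assumes "1 \<le> x1" "1 \<le> y1" "1 \<le> x2" "1 \<le> y2"
  shows "3 / 2 * (real ((x1+y1) choose x1) * real ((x2+y2) choose x2))
          \<le> real ((x1+y1+x2+y2) choose (x1+x2))"
proof -
  have "(1 + 1/2 * real (1::nat)) * (real ((x1+y1) choose x1) * real ((x2+y2) choose x2))
          \<le> real ((x1+y1+x2+y2) choose (x1+x2))"
    by (rule central[where M=1]) (use assms in \<open>auto simp: power_divide\<close>)
  then show ?thesis by simp
qed

lemma one_neighbor_up:
  fixes x1 y1 x2 y2 :: nat
  assumes "1 \<le> x2" "(real x1 + 1) * (real y2 + 1) \<le> 2 * (real y1 * real x2)"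
  shows "3 / 2 * (real ((x1+y1) choose x1) * real ((x2+y2) choose x2))
          \<le> real ((x1+y1+x2+y2) choose (x1+x2))"
proof -
  define A where "A = real ((x1+y1) choose x1) * real ((x2+y2) choose x2)"
  define B where "B = real ((x1+y1) choose Suc x1) * real ((x2+y2) choose (x2 - 1))"
  have e1: "real ((x1+y1) choose Suc x1) * (real x1 + 1) = real ((x1+y1) choose x1) * real y1"
    using binom_up_real[of x1 "x1+y1"] by simp
  have e2: "real ((x2+y2) choose Suc (x2 - 1)) * (real (x2 - 1) + 1) = real ((x2+y2) choose (x2-1)) * (real (x2+y2) - real (x2 - 1))"
    using binom_up_real[of "x2 - 1" "x2+y2"] by simp
  have s: "Suc (x2 - 1) = x2" "real (x2 - 1) = real x2 - 1" using assms by (auto simp: of_nat_diff)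
  have e2': "real ((x2+y2) choose x2) * real x2 = real ((x2+y2) choose (x2-1)) * (real y2 + 1)"
    using e2 s by simp
  have key: "B * ((real x1 + 1) * (real y2 + 1)) = A * (real y1 * real x2)"
  proof -
    have "B * ((real x1 + 1) * (real y2 + 1)) = (real ((x1+y1) choose Suc x1) * (real x1 + 1)) * (real ((x2+y2) choose (x2 - 1)) * (real y2 + 1))"
      by (simp add: B_def algebra_simps)
    also have "\<dots> = (real ((x1+y1) choose x1) * real y1) * (real ((x2+y2) choose x2) * real x2)"
      using e1 e2' by simp
    finally show ?thesis by (simp add: A_def algebra_simps)
  qed
  have A0: "A \<ge> 0" by (simp add: A_def)
  have "A * ((real x1 + 1) * (real y2 + 1)) \<le> A * (2 * (real y1 * real x2))"
    using assms A0 by (intro mult_left_mono) auto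
  also have "\<dots> = 2 * (B * ((real x1 + 1) * (real y2 + 1)))" using key by simp
  finally have "A \<le> 2 * B" by (simp add: mult.assoc[symmetric])
  moreover have "A + B \<le> real ((x1+y1+x2+y2) choose (x1+x2))"
  proof -
    have "real ((x1+y1) choose x1) * real ((x2+y2) choose (x1+x2-x1)) + real ((x1+y1) choose Suc x1) * real ((x2+y2) choose (x1+x2 - Suc x1))
       \<le> real (((x1+y1)+(x2+y2)) choose (x1+x2))"
      by (rule pair_le) (use assms in auto)
    moreover have "x1 + x2 - Suc x1 = x2 - 1" by simp
    ultimately show ?thesis by (simp add: A_def B_def add.assoc)
  qed
  ultimately show ?thesis by (simp add: A_def[symmetric])
qed

lemma swap_blocks: "real ((x2+y2+x1+y1) choose (x2+x1)) = real ((x1+y1+x2+y2) choose (x1+x2))"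
  by (simp add: add.commute add.left_commute)

lemma one_neighbor_down:
  fixes x1 y1 x2 y2 :: nat
  assumes "1 \<le> x1" "(real x2 + 1) * (real y1 + 1) \<le> 2 * (real y2 * real x1)"
  shows "3 / 2 * (real ((x1+y1) choose x1) * real ((x2+y2) choose x2))
          \<le> real ((x1+y1+x2+y2) choose (x1+x2))"
  using one_neighbor_up[of x1 x2 y1 y2, OF assms] swap_blocks[of x2 y2 x1 y1]
  by (simp add: mult.commute)



lemma deviation:
  fixes x1 y1 x2 y2 u :: nat and t :: real
  assumes x1: "x1 = y1 + u" and y2: "x2 + u \<le> y2" and u4: "4 \<le> u"
    and y1t: "real y1 \<le> t" and ut: "real u \<le> t"
  shows "(1 + real u / (3 * t)) ^ (u div 4) * (real ((x1+y1) choose x1) * real ((x2+y2) choose x2))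
          \<le> real ((x1+y1+x2+y2) choose (x1+x2))"
proof -
  define q where "q = 1 + real u / (3 * t)"
  define d where "d = u div 4"
  define a where "a e = real ((x1+y1) choose (x1 - e)) * real ((x2+y2) choose (x2 + e))" for e
  have tpos: "t > 0" using ut u4 by simp
  have q0: "q \<ge> 0" using tpos by (simp add: q_def)
  have d4: "4 * d \<le> u" by (simp add: d_def)
  have step: "q * a e \<le> a (Suc e)" if e: "Suc e \<le> d" for e
  proof -
    have ex: "e < x1" using e d4 x1 by simp
    have i1: "real ((x1+y1) choose Suc (x1 - Suc e)) * (real (x1 - Suc e) + 1)
             = real ((x1+y1) choose (x1 - Suc e)) * (real (x1+y1) - real (x1 - Suc e))"
      using binom_up_real[of "x1 - Suc e" "x1+y1"] by simp
    have s1: "Suc (x1 - Suc e) = x1 - e" "real (x1 - Suc e) = real x1 - real e - 1" using ex by (auto simp: of_nat_diff)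
    have i1': "real ((x1+y1) choose (x1 - e)) * (real x1 - real e) = real ((x1+y1) choose (x1 - Suc e)) * (real y1 + real e + 1)"
      using i1 s1 by (simp add: algebra_simps)
    have i2: "real ((x2+y2) choose Suc (x2 + e)) * (real (x2 + e) + 1) = real ((x2+y2) choose (x2 + e)) * (real (x2+y2) - real (x2 + e))"
      using binom_up_real[of "x2 + e" "x2+y2"] e d4 y2 by simp
    have f1: "q * (real y1 + real e + 1) \<le> real x1 - real e"
    proof -
      have "real u / (3 * t) * (real y1 + real e + 1) \<le> real u / (3 * t) * (t + real u / 4)"
      proof (rule mult_left_mono)
        have "real e + 1 \<le> real u / 4" using e d4 by simp
        then show "real y1 + real e + 1 \<le> t + real u / 4" using y1t by simp
      qed (use tpos in simp)
      also have "\<dots> \<le> real u / (3 * t) * (t + t / 4)" using ut tpos by (intro mult_left_mono) auto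
      also have "\<dots> = 5 * real u / 12" using tpos by (simp add: field_simps)
      finally have A: "real u / (3 * t) * (real y1 + real e + 1) \<le> 5 * real u / 12" .
      have B: "real x1 - real e - (real y1 + real e + 1) \<ge> real u / 2" using x1 e d4 by simp
      have C: "q * (real y1 + real e + 1) = (real y1 + real e + 1) + real u / (3 * t) * (real y1 + real e + 1)"
        unfolding q_def by (simp add: algebra_simps)
      have "0 \<le> real u" by simp
      then show ?thesis using A B C by linarith
    qed
    have f2: "real x2 + real e + 1 \<le> real y2 - real e" using y2 e d4 by simp
    have pos1: "real y1 + real e + 1 > 0" "real x2 + real e + 1 > 0" by simp_all
    have i2': "real ((x2+y2) choose Suc (x2 + e)) * (real x2 + real e + 1) = real ((x2+y2) choose (x2 + e)) * (real y2 - real e)"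
      using i2 by (simp add: algebra_simps)
    have aS: "a (Suc e) = real ((x1+y1) choose (x1 - Suc e)) * real ((x2+y2) choose Suc (x2 + e))"
      by (simp add: a_def)
    have A: "a (Suc e) * ((real y1 + real e + 1) * (real x2 + real e + 1)) = a e * ((real x1 - real e) * (real y2 - real e))"
    proof -
      have "a (Suc e) * ((real y1 + real e + 1) * (real x2 + real e + 1))
          = (real ((x1+y1) choose (x1 - Suc e)) * (real y1 + real e + 1)) * (real ((x2+y2) choose Suc (x2 + e)) * (real x2 + real e + 1))"
        by (simp only: aS ac_simps)
      also have "\<dots> = (real ((x1+y1) choose (x1 - e)) * (real x1 - real e)) * (real ((x2+y2) choose (x2 + e)) * (real y2 - real e))"
        by (simp only: i1'[symmetric] i2')
      also have "\<dots> = a e * ((real x1 - real e) * (real y2 - real e))"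
        by (simp only: a_def ac_simps)
      finally show ?thesis .
    qed
    have a0: "a e \<ge> 0" by (simp add: a_def)
    have "q * a e * ((real y1 + real e + 1) * (real x2 + real e + 1)) = a e * ((q * (real y1 + real e + 1)) * (real x2 + real e + 1))"
      by (simp add: algebra_simps)
    also have "\<dots> \<le> a e * ((real x1 - real e) * (real y2 - real e))"
      using f1 f2 a0 q0 pos1 ex by (intro mult_left_mono mult_mono) auto
    also have "\<dots> = a (Suc e) * ((real y1 + real e + 1) * (real x2 + real e + 1))" using A by simp
    finally show ?thesis using pos1 by (simp add: mult_le_cancel_right_pos)
  qed
  have ind: "q ^ e * a 0 \<le> a e" if "e \<le> d" for e
    using that
  proof (induction e)
    case 0 then show ?case by simp
  next
    case (Suc e)
    then have "q ^ e * a 0 \<le> a e" by simp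
    then have "q * (q ^ e * a 0) \<le> q * a e" using q0 by (intro mult_left_mono) auto
    also have "\<dots> \<le> a (Suc e)" using step Suc.prems by simp
    finally show ?case by (simp add: algebra_simps)
  qed
  have "q ^ d * a 0 \<le> a d" using ind by simp
  also have "a d \<le> real ((x1+y1+x2+y2) choose (x1+x2))"
  proof -
    have dx: "d \<le> x1" using d4 x1 by simp
    have "real ((x1+y1) choose (x1 - d)) * real ((x2+y2) choose ((x1+x2) - (x1 - d))) \<le> real (((x1+y1)+(x2+y2)) choose (x1+x2))"
      by (rule single_le) simp
    moreover have "(x1+x2) - (x1 - d) = x2 + d" using dx by simp
    ultimately show ?thesis by (simp add: a_def add.assoc)
  qed
  finally show ?thesis by (simp add: q_def d_def a_def)
qed



definition bb :: real where "bb = 1/100"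

definition H :: "real \<Rightarrow> nat \<Rightarrow> real" where
  "H L t = exp (bb * (max 0 (ln (real (max t 1)) - L))^2)"

lemma H_ge1: "H L t \<ge> 1"
  unfolding H_def bb_def by simp

lemma H_pos: "H L t > 0"
  unfolding H_def by simp

lemma H_mono: assumes "s \<le> t" shows "H L s \<le> H L t"
proof -
  have "ln (real (max s 1)) \<le> ln (real (max t 1))" using assms by simp
  then have "max 0 (ln (real (max s 1)) - L) \<le> max 0 (ln (real (max t 1)) - L)" by (intro max.mono) auto
  then have "(max 0 (ln (real (max s 1)) - L))^2 \<le> (max 0 (ln (real (max t 1)) - L))^2"
    by (intro power_mono) auto
  then show ?thesis unfolding H_def bb_def by simp
qed

lemma H_one: assumes "real t \<le> exp L" "L \<ge> 0" shows "H L t = 1"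
proof -
  have "ln (real (max t 1)) \<le> L"
  proof (cases "t \<le> 1")
    case True
    then have "real (max t 1) = 1" by simp
    then show ?thesis using assms(2) by simp
  next
    case False
    then have "real (max t 1) = real t" by simp
    have "ln (real t) \<le> ln (exp L)" using assms(1) False by (subst ln_le_cancel_iff) auto
    then show ?thesis using \<open>real (max t 1) = real t\<close> by simp
  qed
  then show ?thesis unfolding H_def by simp
qed

lemma H_ratio:
  assumes L: "L \<ge> 0" and s: "1 \<le> s" "s \<le> t"
  shows "H L t \<le> H L s * exp (2 * bb * ln (real t) * (ln (real t) - ln (real s)))"
proof -
  define A where "A = max 0 (ln (real t) - L)"
  define B where "B = max 0 (ln (real s) - L)"
  have mt: "real (max t 1) = real t" "real (max s 1) = real s" using s by auto
  have lns: "ln (real s) \<le> ln (real t)" "0 \<le> ln (real s)" using s by auto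
  have B0: "0 \<le> B" and BA: "B \<le> A" and AB: "A - B \<le> ln (real t) - ln (real s)" and Al: "A \<le> ln (real t)"
    using lns L by (auto simp: A_def B_def)
  have "A^2 - B^2 = (A - B) * (A + B)" by (simp add: power2_eq_square algebra_simps)
  also have "\<dots> \<le> (ln (real t) - ln (real s)) * (2 * ln (real t))"
    using AB BA B0 Al by (intro mult_mono) auto
  finally have "bb * (A^2 - B^2) \<le> bb * ((ln (real t) - ln (real s)) * (2 * ln (real t)))"
    by (rule mult_left_mono) (simp add: bb_def)
  then have "bb * A^2 \<le> bb * B^2 + 2 * bb * ln (real t) * (ln (real t) - ln (real s))"
    by (simp add: algebra_simps)
  then have "exp (bb * A^2) \<le> exp (bb * B^2 + 2 * bb * ln (real t) * (ln (real t) - ln (real s)))"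
    by simp
  then show ?thesis unfolding H_def mt A_def[symmetric] B_def[symmetric] by (simp add: exp_add)
qed

lemma H_upper:
  assumes L: "L \<ge> 0" and t: "1 \<le> t"
  shows "H L t \<le> exp (bb * (ln (real t))^2)"
proof -
  have "max 0 (ln (real t) - L) \<le> ln (real t)" using L t by auto
  then have "(max 0 (ln (real t) - L))^2 \<le> (ln (real t))^2" by (intro power_mono) auto
  then show ?thesis using t unfolding H_def bb_def by simp
qed

lemma H_lower:
  assumes L: "L \<ge> 0" and t: "exp (2 * L) \<le> real t"
  shows "exp (bb * (ln (real t))^2 / 4) \<le> H L t"
proof -
  have "exp (2 * L) \<ge> 1" using L by simp
  then have t1: "real t \<ge> 1" using t by linarith
  then have tp: "real t > 0" by simp
  have "2 * L \<le> ln (real t)" using t tp by (simp add: ln_ge_iff)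
  then have "ln (real t) / 2 \<le> ln (real t) - L" by linarith
  then have "ln (real t) / 2 \<le> max 0 (ln (real t) - L)" by (simp add: le_max_iff_disj)
  then have "(ln (real t) / 2)^2 \<le> (max 0 (ln (real t) - L))^2"
    using L \<open>2 * L \<le> ln (real t)\<close> by (intro power_mono) auto
  then have "bb * (ln (real t))^2 / 4 \<le> bb * (max 0 (ln (real t) - L))^2"
    unfolding bb_def by (simp add: power_divide)
  then show ?thesis using t1 unfolding H_def by simp
qed



definition AF :: "real \<Rightarrow> bool" where
  "AF t \<longleftrightarrow> 6 \<le> ln t \<and> 900 \<le> t \<and> ln t \<le> sqrt t \<and> 4 \<le> t / ln t
     \<and> bb * (ln t)^2 \<le> (t / (4 * ln t) - 1) / (6 * ln t) \<and> sqrt t \<le> t / 3 - 1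
     \<and> 3 * t powr (1/25) \<le> t powr (1/4) / 4 \<and> 4 \<le> t powr (1/4)"

lemma AF_eventually: "eventually AF at_top"
proof -
  have e1: "eventually (\<lambda>t::real. 6 \<le> ln t) at_top" by real_asymp
  have e2: "eventually (\<lambda>t::real. 900 \<le> t) at_top" by real_asymp
  have e3: "eventually (\<lambda>t::real. ln t \<le> sqrt t) at_top" by real_asymp
  have e4: "eventually (\<lambda>t::real. 4 \<le> t / ln t) at_top" by real_asymp
  have e5: "eventually (\<lambda>t::real. (1/100) * (ln t)^2 \<le> (t / (4 * ln t) - 1) / (6 * ln t)) at_top" by real_asymp
  have e6: "eventually (\<lambda>t::real. sqrt t \<le> t / 3 - 1) at_top" by real_asymp
  have e7: "eventually (\<lambda>t::real. 3 * t powr (1/25) \<le> t powr (1/4) / 4) at_top" by real_asymp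
  have e8: "eventually (\<lambda>t::real. 4 \<le> t powr (1/4)) at_top" by real_asymp
  show ?thesis unfolding AF_def bb_def
    using e1 e2 e3 e4 e5 e6 e7 e8 by eventually_elim auto
qed

lemma AF_threshold: "\<exists>L\<ge>0. \<forall>t. exp L \<le> t \<longrightarrow> AF t"
proof -
  obtain N where N: "\<And>t. t \<ge> N \<Longrightarrow> AF t" using AF_eventually by (auto simp: eventually_at_top_linorder)
  define L where "L = ln (max N 1)"
  have "L \<ge> 0" by (simp add: L_def)
  moreover have "exp L = max N 1" by (simp add: L_def)
  ultimately show ?thesis using N by (intro exI[of _ L]) auto
qed



lemma rD:
  fixes D M :: nat
  assumes D1: "1 \<le> D" and DM: "11 * D^2 \<le> M"
  shows "1/4 \<le> ((real M + 1 - real D) / (real M + real D)) ^ (4*D)"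
proof -
  have Mp: "real M > 0" using D1 DM by (metis One_nat_def le_trans less_le_trans mult_pos_pos nat_0_less_mult_iff
       of_nat_0_less_iff one_le_power order_le_less zero_less_numeral zero_less_one)
  have DD: "real D \<le> real D ^ 2" using D1 by (simp add: power2_eq_square)
  have DMr: "11 * real D ^ 2 \<le> real M" using DM by (metis of_nat_le_iff of_nat_mult of_nat_numeral of_nat_power)
  have x1: "-1 \<le> - (2 * real D / real M)"
  proof -
    have "2 * real D \<le> real M" using DD DMr by linarith
    then show ?thesis using Mp by (simp add: divide_simps)
  qed
  have r: "1 + - (2 * real D / real M) \<le> (real M + 1 - real D) / (real M + real D)"
  proof -
    have "(1 - 2 * real D / real M) = (real M - 2 * real D) / real M" using Mp by (simp add: field_simps)
    also have "\<dots> \<le> (real M + 1 - real D) / (real M + real D)"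
    proof -
      have "(real M - 2 * real D) * (real M + real D) \<le> (real M + 1 - real D) * real M"
        by (simp add: algebra_simps power2_eq_square)
      then show ?thesis using Mp D1 by (simp add: divide_simps)
    qed
    finally show ?thesis by simp
  qed
  have b: "1 + real (4*D) * (- (2 * real D / real M)) \<le> (1 + - (2 * real D / real M)) ^ (4*D)"
    by (rule Bernoulli_inequality[OF x1])
  have c: "1/4 \<le> 1 + real (4*D) * (- (2 * real D / real M))"
  proof -
    have "real (4*D) * (2 * real D / real M) = 8 * real D ^ 2 / real M" by (simp add: power2_eq_square)
    also have "\<dots> \<le> 3/4" using DMr Mp by (simp add: divide_simps)
    finally show ?thesis by simp
  qed
  have "(1 + - (2 * real D / real M)) ^ (4*D) \<le> ((real M + 1 - real D) / (real M + real D)) ^ (4*D)"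
    by (rule power_mono[OF r]) (use x1 in simp)
  then show ?thesis using b c by linarith
qed

definition KEYP :: "real \<Rightarrow> nat \<Rightarrow> nat \<Rightarrow> nat \<Rightarrow> nat \<Rightarrow> bool" where
  "KEYP L x1 y1 x2 y2 \<longleftrightarrow>
     real (x1+y1+x2+y2) * H L (min (x1+x2) (y1+y2)) * real ((x1+y1) choose x1) * real ((x2+y2) choose x2)
     \<le> (real (x1+y1) * H L (min x1 y1) + real (x2+y2) * H L (min x2 y2) + 1) * real ((x1+y1+x2+y2) choose (x1+x2))"

lemma red:
  assumes x1: "1 \<le> x1" and hz: "x1 + x2 \<le> y1 + y2"
    and main: "real (x1+x2) * H L (x1+x2) * (real ((x1 - 1 + y1) choose (x1 - 1)) * real ((x2+y2) choose x2))
               \<le> real x1 * H L (min x1 y1) * real ((x1 - 1 + y1 + x2 + y2) choose (x1 - 1 + x2))"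
  shows "KEYP L x1 y1 x2 y2"
proof -
  define t where "t = x1 + x2"
  define m1 where "m1 = x1 + y1"
  define m where "m = x1 + y1 + x2 + y2"
  have mint: "min (x1+x2) (y1+y2) = t" using hz by (simp add: t_def)
  have e1: "real x1 * real (m1 choose x1) = real m1 * real ((x1 - 1 + y1) choose (x1 - 1))"
  proof -
    have "x1 * (m1 choose x1) = m1 * ((m1 - 1) choose (x1 - 1))" using x1 by (intro times_binomial_minus1_eq) simp
    moreover have "m1 - 1 = x1 - 1 + y1" using x1 by (simp add: m1_def)
    ultimately show ?thesis by (metis of_nat_mult)
  qed
  have tpos: "t \<ge> 1" using x1 by (simp add: t_def)
  have e2: "real t * real (m choose t) = real m * real ((x1 - 1 + y1 + x2 + y2) choose (x1 - 1 + x2))"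
  proof -
    have "t * (m choose t) = m * ((m - 1) choose (t - 1))" using tpos by (intro times_binomial_minus1_eq) simp
    moreover have "m - 1 = x1 - 1 + y1 + x2 + y2" "t - 1 = x1 - 1 + x2" using x1 by (simp_all add: m_def t_def)
    ultimately show ?thesis by (metis of_nat_mult)
  qed
  define P where "P = real ((x1 - 1 + y1) choose (x1 - 1)) * real ((x2+y2) choose x2)"
  define Q where "Q = real ((x1 - 1 + y1 + x2 + y2) choose (x1 - 1 + x2))"
  have main': "real t * H L t * P \<le> real x1 * H L (min x1 y1) * Q" using main by (simp add: t_def P_def Q_def)
  have "(real m * H L t * real (m1 choose x1) * real ((x2+y2) choose x2)) * (real x1 * real t)
      = real m * real m1 * (real t * H L t * P)"
    using e1 by (simp add: P_def algebra_simps)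
  also have "\<dots> \<le> real m * real m1 * (real x1 * H L (min x1 y1) * Q)"
    using main' by (intro mult_left_mono) auto
  also have "\<dots> = (real m1 * H L (min x1 y1) * real (m choose t)) * (real x1 * real t)"
    using e2 by (simp add: Q_def algebra_simps)
  finally have A: "real m * H L t * real (m1 choose x1) * real ((x2+y2) choose x2) \<le> real m1 * H L (min x1 y1) * real (m choose t)"
    using x1 tpos by (simp add: mult_le_cancel_right_pos)
  have B: "real m1 * H L (min x1 y1) * real (m choose t) \<le> (real m1 * H L (min x1 y1) + real (x2+y2) * H L (min x2 y2) + 1) * real (m choose t)"
  proof (rule mult_right_mono)
    show "real m1 * H L (min x1 y1) \<le> real m1 * H L (min x1 y1) + real (x2+y2) * H L (min x2 y2) + 1"
      using H_ge1[of L "min x2 y2"] by simp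
  qed simp
  have "real m * H L t * real (m1 choose x1) * real ((x2+y2) choose x2) \<le> (real m1 * H L (min x1 y1) + real (x2+y2) * H L (min x2 y2) + 1) * real (m choose t)"
    using A B by (rule order_trans)
  then show ?thesis unfolding KEYP_def mint by (simp add: m_def m1_def t_def)
qed



lemma KEYP_of_bound:
  assumes "H L (x1+x2) * (real ((x1+y1) choose x1) * real ((x2+y2) choose x2)) \<le> real ((x1+y1+x2+y2) choose (x1+x2))"
    and hz: "x1 + x2 \<le> y1 + y2"
  shows "KEYP L x1 y1 x2 y2"
proof -
  define m where "m = x1+y1+x2+y2"
  define C where "C = real ((x1+y1+x2+y2) choose (x1+x2))"
  have mint: "min (x1+x2) (y1+y2) = x1 + x2" using hz by simp
  have "real m * H L (x1+x2) * real ((x1+y1) choose x1) * real ((x2+y2) choose x2) = real m * (H L (x1+x2) * (real ((x1+y1) choose x1) * real ((x2+y2) choose x2)))"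
    by (simp add: algebra_simps)
  also have "\<dots> \<le> real m * C" using assms(1) by (intro mult_left_mono) (auto simp: C_def)
  also have "\<dots> \<le> (real (x1+y1) * H L (min x1 y1) + real (x2+y2) * H L (min x2 y2) + 1) * C"
  proof (rule mult_right_mono)
    have "real (x1+y1) \<le> real (x1+y1) * H L (min x1 y1)" using H_ge1[of L "min x1 y1"] by (simp add: mult_le_cancel_left1)
    moreover have "real (x2+y2) \<le> real (x2+y2) * H L (min x2 y2)" using H_ge1[of L "min x2 y2"] by (simp add: mult_le_cancel_left1)
    ultimately show "real m \<le> real (x1+y1) * H L (min x1 y1) + real (x2+y2) * H L (min x2 y2) + 1"
      by (simp add: m_def)
  qed (simp add: C_def)
  finally show ?thesis unfolding KEYP_def mint by (simp add: m_def C_def)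
qed

lemma key_D:
  assumes L: "L \<ge> 0" and AFt: "AF (real (x1+x2))"
    and hz: "x1 + x2 \<le> y1 + y2"
    and uD: "real (x1+x2) / ln (real (x1+x2)) \<le> real (x1 + x2 - min x1 y1 - min x2 y2)"
  shows "KEYP L x1 y1 x2 y2"
proof -
  define t where "t = real (x1+x2)"
  define u where "u = x1 + x2 - min x1 y1 - min x2 y2"
  define q where "q = 1 + real u / (3 * t)"
  define d where "d = u div 4"
  have ell: "6 \<le> ln t" "4 \<le> t / ln t" "bb * (ln t)^2 \<le> (t / (4 * ln t) - 1) / (6 * ln t)" "900 \<le> t"
    using AFt unfolding AF_def t_def by auto
  have tpos: "t > 0" using ell by linarith
  have ut: "t / ln t \<le> real u" using uD by (simp add: t_def u_def)
  have u4: "4 \<le> u" using ut ell by linarith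
  have ule: "real u \<le> t" by (simp add: u_def t_def)
  have dev: "q ^ d * (real ((x1+y1) choose x1) * real ((x2+y2) choose x2)) \<le> real ((x1+y1+x2+y2) choose (x1+x2))"
  proof (cases "y1 < x1")
    case True
    then have "x2 \<le> y2" using hz by linarith
    then have uu: "u = x1 - y1" "x1 = y1 + u" using True by (auto simp: u_def)
    have c1: "x2 + u \<le> y2" using hz uu by linarith
    have c2: "real y1 \<le> t" using True by (simp add: t_def)
    show ?thesis unfolding q_def d_def
      by (rule deviation[OF uu(2) c1 u4 c2 ule])
  next
    case False
    show ?thesis
    proof (cases "y2 < x2")
      case True
      then have uu: "u = x2 - y2" "x2 = y2 + u" using False by (auto simp: u_def)
      have c1: "x1 + u \<le> y1" using hz uu by linarith
      have c2: "real y2 \<le> t" using True by (simp add: t_def)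
      have "q ^ d * (real ((x2+y2) choose x2) * real ((x1+y1) choose x1)) \<le> real ((x2+y2+x1+y1) choose (x2+x1))"
        unfolding q_def d_def
        by (rule deviation[OF uu(2) c1 u4 c2 ule])
      then show ?thesis using swap_blocks[of x2 y2 x1 y1] by (simp add: mult.commute)
    next
      case False2: False
      then have "u = 0" using False by (simp add: u_def)
      then show ?thesis using u4 by simp
    qed
  qed
  have Hq: "H L (x1+x2) \<le> q ^ d"
  proof -
    have "H L (x1+x2) \<le> exp (bb * (ln t)^2)" using H_upper[OF L, of "x1+x2"] u4 ule by (simp add: t_def)
    also have "\<dots> \<le> exp ((t / (4 * ln t) - 1) / (6 * ln t))" using ell by simp
    also have "\<dots> \<le> exp (real d * ln q)"
    proof -
      define x where "x = real u / (3 * t)"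
      have x0: "0 \<le> x" and x1: "x \<le> 1/3" using tpos ule by (auto simp: x_def divide_simps)
      have xl: "1 / (3 * ln t) \<le> x"
      proof -
        have "t / ln t / (3 * t) \<le> real u / (3 * t)" using ut tpos by (intro divide_right_mono) auto
        then show ?thesis using tpos by (simp add: x_def)
      qed
      have lnq: "x / 2 \<le> ln q"
      proof -
        have "x - x^2 \<le> ln (1 + x)" using x0 x1 by (intro ln_one_plus_pos_lower_bound) auto
        moreover have "x / 2 \<le> x - x^2"
        proof -
          have "x * x \<le> x * (1/3)" by (rule mult_left_mono[OF x1 x0])
          moreover have "0 \<le> x * x" using x0 by simp
          ultimately show ?thesis unfolding power2_eq_square by linarith
        qed
        ultimately show ?thesis by (simp add: q_def x_def)
      qed
      have dl: "t / (4 * ln t) - 1 \<le> real d"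
      proof -
        have "real u / 4 - 1 \<le> real d" unfolding d_def by linarith
        moreover have "t / (4 * ln t) \<le> real u / 4" using ut by simp
        ultimately show ?thesis by linarith
      qed
      have "(t / (4 * ln t) - 1) / (6 * ln t) = (t / (4 * ln t) - 1) * ((1 / (3 * ln t)) / 2)"
        by (simp add: field_simps)
      also have "\<dots> \<le> real d * (x / 2)"
        using dl xl ell by (intro mult_mono) auto
      also have "\<dots> \<le> real d * ln q" using lnq by (intro mult_left_mono) auto
      finally show ?thesis by simp
    qed
    also have "\<dots> = q ^ d"
    proof -
      have "real u / (3 * t) \<ge> 0" using tpos by simp
      then have "q > 0" by (simp add: q_def)
      then show ?thesis by (simp add: exp_of_nat_mult)
    qed
    finally show ?thesis .
  qed
  have "H L (x1+x2) * (real ((x1+y1) choose x1) * real ((x2+y2) choose x2)) \<le> q ^ d * (real ((x1+y1) choose x1) * real ((x2+y2) choose x2))"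
    using Hq by (intro mult_right_mono) auto
  also have "\<dots> \<le> real ((x1+y1+x2+y2) choose (x1+x2))" using dev .
  finally show ?thesis by (rule KEYP_of_bound[OF _ hz])
qed



lemma ln3_le2: "ln (3::real) \<le> 2"
proof -
  have "(3::real) \<le> exp 2" using exp_ge_add_one_self[of "2::real"] by simp
  then have "ln (3::real) \<le> ln (exp 2)" by (subst ln_le_cancel_iff) auto
  then show ?thesis by simp
qed

lemma key_C:
  assumes L: "L \<ge> 0" and AFt: "AF (real (x1+x2))"
    and hz: "x1 + x2 \<le> y1 + y2" and ht: "min x2 y2 \<le> min x1 y1"
    and uC: "real (x1 + x2 - min x1 y1 - min x2 y2) < real (x1+x2) / ln (real (x1+x2))"
    and T: "sqrt (real (x1+x2)) \<le> real (min x2 y2)"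
  shows "KEYP L x1 y1 x2 y2"
proof -
  define t where "t = real (x1+x2)"
  define t1 where "t1 = min x1 y1"
  define t2 where "t2 = min x2 y2"
  define u where "u = x1 + x2 - t1 - t2"
  have A: "6 \<le> ln t" "900 \<le> t" "sqrt t \<le> t / 3 - 1" "3 * t powr (1/25) \<le> t powr (1/4) / 4" "4 \<le> t powr (1/4)"
    using AFt unfolding AF_def t_def by auto
  have tpos: "t > 0" using A by linarith
  have tt: "t1 + t2 \<le> x1 + x2" by (simp add: t1_def t2_def)
  have t1r: "real t1 = t - real t2 - real u" using tt by (simp add: u_def t_def)
  have "t2 \<le> t1" using ht by (simp add: t1_def t2_def)
  then have "2 * t2 \<le> x1 + x2" using tt by linarith
  then have "real (2 * t2) \<le> real (x1 + x2)" by (simp only: of_nat_le_iff)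
  then have t2half: "real t2 \<le> t / 2" unfolding t_def by simp
  have ul: "real u < t / 6"
  proof -
    have "t / ln t \<le> t / 6" using A tpos by (intro divide_left_mono) auto
    moreover have "real u < t / ln t" using uC unfolding u_def t_def t1_def t2_def .
    ultimately show ?thesis by linarith
  qed
  have t13: "t / 3 \<le> real t1" using t1r t2half ul by linarith
  have x1t1: "t1 \<le> x1" by (simp add: t1_def)
  have "real t1 \<ge> 1" using t13 A by linarith
  then have t1ge: "1 \<le> t1" by simp
  then have x1ge: "1 \<le> x1" using x1t1 by linarith
  have sq: "sqrt t \<le> real t2" using T by (simp add: t_def t2_def)
  define M where "M = min (min (x1 - 1) y1) (min x2 y2)"
  have Msq: "sqrt t \<le> real M"
  proof -
    have "sqrt t \<le> real (x1 - 1)" using t13 x1t1 A x1ge by (simp add: of_nat_diff)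
    moreover have "sqrt t \<le> real y1" using t13 A by (simp add: t1_def)
    moreover have "sqrt t \<le> real x2" "sqrt t \<le> real y2" using sq by (auto simp: t2_def)
    ultimately show ?thesis by (simp add: M_def)
  qed
  define D where "D = nat \<lfloor>t powr (1/4) / 4\<rfloor>"
  have fl1: "1 \<le> \<lfloor>t powr (1/4) / 4\<rfloor>" using A by (simp add: le_floor_iff)
  have Dr: "real D = of_int \<lfloor>t powr (1/4) / 4\<rfloor>" unfolding D_def using fl1 by simp
  have Dle: "real D \<le> t powr (1/4) / 4" unfolding Dr by (rule of_int_floor_le)
  have Dge: "t powr (1/4) / 4 - 1 \<le> real D" unfolding Dr by linarith
  have D1: "1 \<le> D" unfolding D_def using fl1 by linarith
  have pw: "(t powr (1/4))^2 = sqrt t"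
  proof -
    have "(t powr (1/4))^2 = t powr (1/4) * t powr (1/4)" by (simp add: power2_eq_square)
    also have "\<dots> = t powr (1/2)" by (simp add: powr_add[symmetric])
    also have "\<dots> = sqrt t" using tpos by (simp add: powr_half_sqrt)
    finally show ?thesis .
  qed
  have DM: "11 * D^2 \<le> M"
  proof -
    have "real D ^ 2 \<le> (t powr (1/4) / 4)^2" using Dle by (intro power_mono) auto
    also have "\<dots> = sqrt t / 16" by (simp add: power_divide pw)
    finally have "real D ^ 2 \<le> sqrt t / 16" .
    moreover have "0 \<le> sqrt t" using tpos by simp
    ultimately have "11 * real D ^ 2 \<le> real M" using Msq by linarith
    then show ?thesis by (metis of_nat_le_iff of_nat_mult of_nat_numeral of_nat_power)
  qed
  have DleM: "D \<le> M"
  proof -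
    have "D \<le> D^2" by (simp add: power2_eq_square)
    then show ?thesis using DM by linarith
  qed
  have M1: "1 \<le> M" using D1 DleM by simp
  define P where "P = real ((x1 - 1 + y1) choose (x1 - 1)) * real ((x2+y2) choose x2)"
  define Q where "Q = real ((x1 - 1 + y1 + x2 + y2) choose (x1 - 1 + x2))"
  have cen: "(1 + 1 * real D) * P \<le> Q"
    unfolding P_def Q_def
  proof (rule central[where M=M])
    show "M \<le> x1 - 1" "M \<le> y1" "M \<le> x2" "M \<le> y2" by (simp_all add: M_def)
    show "1\<^sup>2 / 4 \<le> ((real M + 1 - real D) / (real M + real D)) ^ (4 * D)" using rD[OF D1 DM] by simp
  qed (use DleM M1 in auto)
  have Hr: "H L (x1+x2) \<le> H L t1 * t powr (1/25)"
  proof -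
    have "H L (x1+x2) \<le> H L t1 * exp (2 * bb * ln t * (ln t - ln (real t1)))"
    proof -
      have "t1 \<le> x1 + x2" using tt by simp
      then show ?thesis unfolding t_def by (rule H_ratio[OF L t1ge])
    qed
    also have "\<dots> \<le> H L t1 * t powr (1/25)"
    proof (rule mult_left_mono)
      have "ln t - ln (real t1) \<le> ln 3"
      proof -
        have "t \<le> 3 * real t1" using t13 by simp
        then have "ln t \<le> ln (3 * real t1)" using tpos by simp
        also have "\<dots> = ln 3 + ln (real t1)" using t1ge by (simp add: ln_mult)
        finally show ?thesis by simp
      qed
      then have "2 * bb * ln t * (ln t - ln (real t1)) \<le> 2 * bb * ln t * 2"
        using ln3_le2 A by (intro mult_left_mono) (auto simp: bb_def)
      also have "\<dots> = ln t / 25" by (simp add: bb_def)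
      finally have "exp (2 * bb * ln t * (ln t - ln (real t1))) \<le> exp (ln t / 25)" by simp
      also have "\<dots> = t powr (1/25)" using tpos by (simp add: powr_def)
      finally show "exp (2 * bb * ln t * (ln t - ln (real t1))) \<le> t powr (1/25)" .
    qed (use H_pos[of L t1] in simp)
    finally show ?thesis .
  qed
  have t3x1: "t \<le> 3 * real x1" using t13 x1t1 by linarith
  have P0: "P \<ge> 0" by (simp add: P_def)
  have "t * H L (x1+x2) * P \<le> (3 * real x1) * (H L t1 * t powr (1/25)) * P"
    using t3x1 Hr P0 tpos H_pos[of L "x1+x2"] by (intro mult_right_mono mult_mono) auto
  also have "\<dots> = real x1 * H L t1 * (3 * t powr (1/25)) * P" by (simp add: algebra_simps)
  also have "\<dots> \<le> real x1 * H L t1 * (1 + real D) * P"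
  proof -
    have "3 * t powr (1/25) \<le> 1 + real D" using A Dge by linarith
    then show ?thesis using P0 H_pos[of L t1] by (intro mult_right_mono mult_left_mono) auto
  qed
  also have "\<dots> \<le> real x1 * H L t1 * Q" using cen H_pos[of L t1] by (simp add: mult.assoc mult_left_mono)
  finally have main: "t * H L (x1+x2) * P \<le> real x1 * H L t1 * Q" .
  show ?thesis
    by (rule red[OF x1ge hz]) (use main in \<open>simp add: t_def t1_def P_def Q_def\<close>)
qed



lemma key_S:
  assumes L: "L \<ge> 0" and AFt: "AF (real (x1+x2))"
    and hz: "x1 + x2 \<le> y1 + y2" and ht: "min x2 y2 \<le> min x1 y1"
    and uC: "real (x1 + x2 - min x1 y1 - min x2 y2) < real (x1+x2) / ln (real (x1+x2))"
    and T: "real (min x2 y2) < sqrt (real (x1+x2))"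
  shows "KEYP L x1 y1 x2 y2"
proof -
  define t where "t = real (x1+x2)"
  define t1 where "t1 = min x1 y1"
  define t2 where "t2 = min x2 y2"
  define u where "u = x1 + x2 - t1 - t2"
  have A: "6 \<le> ln t" "900 \<le> t" "ln t \<le> sqrt t"
    using AFt unfolding AF_def t_def by auto
  have tpos: "t > 0" using A by linarith
  have tt: "t1 + t2 \<le> x1 + x2" by (simp add: t1_def t2_def)
  have t1r: "real t1 = t - real t2 - real u" using tt by (simp add: u_def t_def)
  have ul: "real u < t / ln t" using uC unfolding u_def t_def t1_def t2_def .
  have lnt: "t / ln t \<le> t / 6" using A tpos by (intro divide_left_mono) auto
  have sqt: "sqrt t \<le> t / 30"
  proof -
    have s9: "sqrt (900::real) = 30" by (rule real_sqrt_unique) auto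
    have "sqrt 900 \<le> sqrt t" using A by (subst real_sqrt_le_iff) simp
    then have "30 \<le> sqrt t" using s9 by simp
    then have "30 * sqrt t \<le> sqrt t * sqrt t" using tpos by (intro mult_right_mono) auto
    also have "\<dots> = t" using tpos by simp
    finally show ?thesis by simp
  qed
  have t2s: "real t2 < sqrt t" using T by (simp add: t_def t2_def)
  define w where "w = t - real t1"
  have w: "w = real t2 + real u" using t1r by (simp add: w_def)
  have w0: "0 \<le> w" using w by simp
  have wle: "w \<le> sqrt t + t / ln t" using w t2s ul by linarith
  have t145: "4 * t / 5 \<le> real t1" using wle sqt lnt w_def by linarith
  have "real t1 \<ge> 1" using t145 A by linarith
  then have t1ge: "1 \<le> t1" by simp
  have x1t1: "t1 \<le> x1" "t1 \<le> y1" by (simp_all add: t1_def)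
  have x1ge: "1 \<le> x1" using t1ge x1t1 by linarith
  have Hr: "H L (x1+x2) \<le> 11/10 * H L t1"
  proof -
    have "H L (x1+x2) \<le> H L t1 * exp (2 * bb * ln t * (ln t - ln (real t1)))"
    proof -
      have "t1 \<le> x1 + x2" using tt by simp
      then show ?thesis unfolding t_def by (rule H_ratio[OF L t1ge])
    qed
    also have "\<dots> \<le> H L t1 * (11/10)"
    proof (rule mult_left_mono)
      have t1p: "real t1 > 0" using t1ge by simp
      have "ln t - ln (real t1) = ln (t / real t1)" using tpos t1p by (simp add: ln_div)
      also have "\<dots> \<le> t / real t1 - 1" using tpos t1p by (intro ln_le_minus_one) simp
      also have "\<dots> = w / real t1" using t1p by (simp add: w_def field_simps)
      also have "\<dots> \<le> w / (4 * t / 5)" using t145 w0 tpos by (intro divide_left_mono) auto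
      also have "\<dots> = (5/4) * (w / t)" by simp
      finally have l1: "ln t - ln (real t1) \<le> (5/4) * (w / t)" .
      have l2: "ln t * (w / t) \<le> 2"
      proof -
        have "ln t * (w / t) \<le> ln t * ((sqrt t + t / ln t) / t)"
          using wle tpos A by (intro mult_left_mono divide_right_mono) auto
        also have "\<dots> = ln t * sqrt t / t + 1" using tpos A by (simp add: field_simps)
        also have "ln t * sqrt t / t \<le> 1"
        proof -
          have "ln t * sqrt t \<le> sqrt t * sqrt t" using A tpos by (intro mult_right_mono) auto
          also have "\<dots> = t" using tpos by simp
          finally show ?thesis using tpos by simp
        qed
        finally show ?thesis by simp
      qed
      have "2 * bb * ln t * (ln t - ln (real t1)) \<le> 2 * bb * ln t * ((5/4) * (w / t))"
        using l1 A by (intro mult_left_mono) (auto simp: bb_def)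
      also have "\<dots> = (5/2) * bb * (ln t * (w / t))" by (simp add: algebra_simps)
      also have "\<dots> \<le> (5/2) * bb * 2" using l2 by (intro mult_left_mono) (auto simp: bb_def)
      also have "\<dots> = 1/20" by (simp add: bb_def)
      finally have e: "2 * bb * ln t * (ln t - ln (real t1)) \<le> 1/20" .
      have "exp (2 * bb * ln t * (ln t - ln (real t1))) \<le> exp (1/20)" using e by simp
      also have "exp (1/20::real) \<le> 11/10"
      proof -
        have "norm (exp (1/20::real)) \<le> 1 + 2 * norm (1/20::real)" by (rule exp_bound_lemma) simp
        then show ?thesis by simp
      qed
      finally show "exp (2 * bb * ln t * (ln t - ln (real t1))) \<le> 11/10" .
    qed (use H_pos[of L t1] in simp)
    finally show ?thesis by simp
  qed
  define P where "P = real ((x1 - 1 + y1) choose (x1 - 1)) * real ((x2+y2) choose x2)"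
  define Q where "Q = real ((x1 - 1 + y1 + x2 + y2) choose (x1 - 1 + x2))"
  have P0: "P \<ge> 0" by (simp add: P_def)
  have x1m: "1 \<le> x1 - 1"
  proof -
    have "real t1 \<ge> 2" using t145 A by linarith
    then have "2 \<le> t1" by simp
    then show ?thesis using x1t1 by linarith
  qed
  have y1ge: "1 \<le> y1" using t1ge x1t1 by linarith
  have main: "t * H L (x1+x2) * P \<le> real x1 * H L t1 * Q"
  proof (cases "x2 = 0 \<and> x1 \<le> y1")
    case True
    then have e: "t = real x1" "t1 = x1" "x1 + x2 = x1" by (auto simp: t_def t1_def)
    have "real ((x1 - 1 + y1) choose (x1 - 1)) * real ((0 + y2) choose (x1 - 1 - (x1 - 1))) \<le> real (((x1 - 1 + y1) + (0 + y2)) choose (x1 - 1))"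
      by (rule single_le) simp
    then have PQ: "P \<le> Q" using True by (simp add: P_def Q_def add.assoc)
    show ?thesis unfolding e using PQ H_pos[of L x1] by (intro mult_left_mono) auto
  next
    case False
    have PQ: "3/2 * P \<le> Q"
    proof (cases "x2 = 0")
      case True
      then have y1x1: "y1 < x1" using False by simp
      have y2ge: "1 \<le> y2" using hz True y1x1 by linarith
      have c: "(real 0 + 1) * (real y1 + 1) \<le> 2 * (real y2 * real (x1 - 1))"
      proof -
        have "real y1 \<le> real (x1 - 1)" using y1x1 by (simp add: of_nat_diff)
        moreover have "real (x1 - 1) \<le> real y2 * real (x1 - 1)" using y2ge by (simp add: mult_le_cancel_right1)
        ultimately show ?thesis using y1ge by simp
      qed
      have "3 / 2 * (real ((x1 - 1 + y1) choose (x1 - 1)) * real ((0 + y2) choose 0)) \<le> real ((x1 - 1 + y1 + 0 + y2) choose (x1 - 1 + 0))"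
        by (rule one_neighbor_down[OF x1m c])
      then show ?thesis using True by (simp add: P_def Q_def)
    next
      case x2nz: False
      show ?thesis
      proof (cases "y2 = 0")
        case True
        have x2g: "1 \<le> x2" using x2nz by simp
        have c: "(real (x1 - 1) + 1) * (real 0 + 1) \<le> 2 * (real y1 * real x2)"
        proof -
          have "real x1 \<le> real y1" using hz True x2g by simp
          moreover have "real y1 \<le> real y1 * real x2" using x2g by (simp add: mult_le_cancel_left1)
          moreover have "0 \<le> real y1 * real x2" by simp
          ultimately have "real x1 \<le> 2 * (real y1 * real x2)" by linarith
          moreover have "real (x1 - 1) + 1 = real x1" using x1ge by (simp add: of_nat_diff)
          ultimately show ?thesis by simp
        qed
        have "3 / 2 * (real ((x1 - 1 + y1) choose (x1 - 1)) * real ((x2 + 0) choose x2)) \<le> real ((x1 - 1 + y1 + x2 + 0) choose (x1 - 1 + x2))"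
          by (rule one_neighbor_up[OF x2g c])
        then show ?thesis using True by (simp add: P_def Q_def)
      next
        case False
        have "3 / 2 * (real ((x1 - 1 + y1) choose (x1 - 1)) * real ((x2 + y2) choose x2)) \<le> real ((x1 - 1 + y1 + x2 + y2) choose (x1 - 1 + x2))"
          by (rule two_neighbor) (use x1m y1ge x2nz False in auto)
        then show ?thesis by (simp add: P_def Q_def)
      qed
    qed
    have "t * H L (x1+x2) * P \<le> t * (11/10 * H L t1) * P"
      using Hr tpos P0 by (intro mult_right_mono mult_left_mono) auto
    also have "\<dots> = (11/15 * t) * H L t1 * (3/2 * P)" by (simp add: algebra_simps)
    also have "\<dots> \<le> real x1 * H L t1 * Q"
    proof (rule mult_mono)
      have "real t1 \<le> real x1" using x1t1 by simp
      then have "11/15 * t \<le> real x1" using t145 tpos by linarith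
      then show "11/15 * t * H L t1 \<le> real x1 * H L t1" using H_pos[of L t1] by (intro mult_right_mono) auto
    qed (use PQ P0 H_pos[of L t1] in auto)
    finally show ?thesis .
  qed
  show ?thesis
    by (rule red[OF x1ge hz]) (use main in \<open>simp add: t_def t1_def P_def Q_def\<close>)
qed



lemma key_oriented:
  assumes L: "L \<ge> 0" and AFall: "\<And>s. exp L \<le> s \<Longrightarrow> AF s"
    and hz: "x1 + x2 \<le> y1 + y2" and ht: "min x2 y2 \<le> min x1 y1"
  shows "KEYP L x1 y1 x2 y2"
proof (cases "real (x1+x2) \<le> exp L")
  case True
  have "H L (x1+x2) = 1" by (rule H_one[OF True L])
  moreover have "real ((x1+y1) choose x1) * real ((x2+y2) choose (x1 + x2 - x1)) \<le> real (((x1+y1)+(x2+y2)) choose (x1+x2))"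
    by (rule single_le) simp
  ultimately show ?thesis by (intro KEYP_of_bound[OF _ hz]) (simp add: add.assoc)
next
  case False
  then have AFt: "AF (real (x1+x2))" using AFall by simp
  show ?thesis
  proof (cases "real (x1+x2) / ln (real (x1+x2)) \<le> real (x1 + x2 - min x1 y1 - min x2 y2)")
    case True
    then show ?thesis by (rule key_D[OF L AFt hz])
  next
    case F2: False
    then have uC: "real (x1 + x2 - min x1 y1 - min x2 y2) < real (x1+x2) / ln (real (x1+x2))" by simp
    show ?thesis
    proof (cases "sqrt (real (x1+x2)) \<le> real (min x2 y2)")
      case True
      then show ?thesis by (rule key_C[OF L AFt hz ht uC])
    next
      case False
      then show ?thesis by (intro key_S[OF L AFt hz ht uC]) simp
    qed
  qed
qed

lemma KEYP_swap: "KEYP L x1 y1 x2 y2 \<Longrightarrow> KEYP L x2 y2 x1 y1"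
  unfolding KEYP_def by (simp add: add.commute add.left_commute min.commute mult.commute mult.left_commute)

lemma KEYP_compl: "KEYP L y1 x1 y2 x2 \<Longrightarrow> KEYP L x1 y1 x2 y2"
proof -
  assume a: "KEYP L y1 x1 y2 x2"
  have c1: "(y1+x1) choose y1 = (x1+y1) choose x1" by (metis add.commute binomial_symmetric le_add2 add_diff_cancel_right')
  have c2: "(y2+x2) choose y2 = (x2+y2) choose x2" by (metis add.commute binomial_symmetric le_add2 add_diff_cancel_right')
  have c3: "(y1+x1+y2+x2) choose (y1+y2) = (x1+y1+x2+y2) choose (x1+x2)"
  proof -
    have s: "(x1+y1+x2+y2) choose (x1+x2) = (x1+y1+x2+y2) choose (y1+y2)"
      using binomial_symmetric[of "x1+x2" "x1+y1+x2+y2"] by simp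
    have e: "y1+x1+y2+x2 = x1+y1+x2+y2" by simp
    show ?thesis unfolding e s ..
  qed
  from a have "real (y1+x1+y2+x2) * H L (min (y1+y2) (x1+x2)) * real ((x1+y1) choose x1) * real ((x2+y2) choose x2)
     \<le> (real (y1+x1) * H L (min y1 x1) + real (y2+x2) * H L (min y2 x2) + 1) * real ((x1+y1+x2+y2) choose (x1+x2))"
    unfolding KEYP_def by (simp only: c1 c2 c3)
  then show ?thesis unfolding KEYP_def by (simp add: ac_simps min.commute)
qed

lemma key_all:
  assumes L: "L \<ge> 0" and AFall: "\<And>s. exp L \<le> s \<Longrightarrow> AF s"
  shows "KEYP L x1 y1 x2 y2"
proof -
  have hz_case: "KEYP L a b c d" if hz: "a + c \<le> b + d" for a b c d
  proof (cases "min c d \<le> min a b")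
    case True
    show ?thesis using key_oriented[OF L AFall hz True] .
  next
    case False
    have "KEYP L c d a b" by (rule key_oriented[OF L AFall]) (use hz False in auto)
    then show ?thesis by (rule KEYP_swap)
  qed
  show ?thesis
  proof (cases "x1 + x2 \<le> y1 + y2")
    case True
    then show ?thesis by (rule hz_case)
  next
    case False
    then have "KEYP L y1 x1 y2 x2" by (intro hz_case) simp
    then show ?thesis by (rule KEYP_compl)
  qed
qed

definition GG :: "real \<Rightarrow> nat \<Rightarrow> nat \<Rightarrow> real" where
  "GG L m j = real m * H L (min j (m - j))"

lemma GG_key:
  assumes L: "L \<ge> 0" and AFall: "\<And>s. exp L \<le> s \<Longrightarrow> AF s" and j1: "j1 \<le> m1" and j2: "j2 \<le> m2"
  shows "GG L (m1+m2) (j1+j2) * real (m1 choose j1) * real (m2 choose j2) \<le> (GG L m1 j1 + GG L m2 j2 + 1) * real ((m1+m2) choose (j1+j2))"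
proof -
  obtain y1 where y1: "m1 = j1 + y1" using j1 le_iff_add by blast
  obtain y2 where y2: "m2 = j2 + y2" using j2 le_iff_add by blast
  have k: "KEYP L j1 y1 j2 y2" by (rule key_all[OF L AFall])
  have e: "j1 + y1 + (j2 + y2) - (j1 + j2) = y1 + y2" by simp
  show ?thesis using k unfolding KEYP_def GG_def y1 y2 e by (simp add: ac_simps)
qed

lemma rpn_lower:
  assumes L: "L \<ge> 0" and AFall: "\<And>s. exp L \<le> s \<Longrightarrow> AF s" and kn: "k \<le> n"
  shows "GG L n k \<le> real (rpn (binomial_lang n k))"
proof -
  have B: "binomial_lang n k = BL n k" by (simp add: binomial_lang_def BL_def)
  have ne: "BL n k \<noteq> {}"
  proof -
    have "replicate k True @ replicate (n - k) False \<in> BL n k" using kn by (simp add: BL_def count_ones_def)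
    then show ?thesis by blast
  qed
  obtain r0 where "lang r0 = BL n k" using expressible[OF BL_finite ne] by blast
  then have ex: "\<exists>m r. lang r = BL n k \<and> nodes r = m" by blast
  have "\<exists>r. lang r = BL n k \<and> nodes r = (LEAST m. \<exists>r. lang r = BL n k \<and> nodes r = m)"
    using LeastI_ex[of "\<lambda>m. \<exists>r. lang r = BL n k \<and> nodes r = m"] ex by blast
  then obtain r where r: "lang r = BL n k" "nodes r = rpn (binomial_lang n k)"
    unfolding rpn_def B by blast
  have H0: "H L 0 = 1" using L by (intro H_one) auto
  have "GG L n k * real (card (lang r)) \<le> real (nodes r) * real (n choose k)"
  proof (rule main_ind[where G="GG L"])
    show "GG L 0 0 \<le> 1" by (simp add: GG_def)
    show "GG L 1 j \<le> 1" for j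
    proof -
      have "min j (1 - j) = 0" by (cases j) auto
      then show ?thesis using H0 by (simp add: GG_def)
    qed
    show "GG L m j \<ge> 0" for m j using H_pos[of L "min j (m - j)"] by (simp add: GG_def)
    show "GG L (m1+m2) (j1+j2) * real (m1 choose j1) * real (m2 choose j2) \<le> (GG L m1 j1 + GG L m2 j2 + 1) * real ((m1+m2) choose (j1+j2))"
      if "j1 \<le> m1" "j2 \<le> m2" for m1 j1 m2 j2 by (rule GG_key[OF L AFall that])
    show "lang r \<subseteq> BL n k" using r by simp
  qed
  moreover have "card (lang r) = n choose k" using r card_BL by simp
  moreover have "(n choose k) > 0" using kn by simp
  ultimately show ?thesis using r by (simp add: mult_le_cancel_right_pos)
qed



theorem corollary5p1:
  shows "\<exists>c::real. c > 0 \<and> (\<exists>k0::nat. \<forall>n k::nat. k0 \<le> k \<and> 2 * k \<le> n \<longrightarrow>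
           real (rpn (binomial_lang n k)) \<ge> real n * real k powr (c * log 2 (real k)))"
proof -
  obtain L where L: "L \<ge> 0" and AFall: "\<And>s. exp L \<le> s \<Longrightarrow> AF s" using AF_threshold by blast
  define c where "c = bb * ln 2 / 4"
  define k0 where "k0 = nat \<lceil>exp (2 * L)\<rceil> + 1"
  have cpos: "c > 0" by (simp add: c_def bb_def)
  have main: "real n * real k powr (c * log 2 (real k)) \<le> real (rpn (binomial_lang n k))"
    if k: "k0 \<le> k" and nk: "2 * k \<le> n" for n k
  proof -
    have "exp (2 * L) \<le> real (nat \<lceil>exp (2 * L)\<rceil>)" by (metis of_nat_nat ceiling_correct ceiling_le_zero exp_gt_zero
          less_le not_le of_int_0_less_iff zero_less_ceiling)
    then have kL: "exp (2 * L) \<le> real k" using k unfolding k0_def by linarith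
    have kpos: "real k > 0" using kL exp_gt_zero[of "2*L"] by linarith
    have "min k (n - k) = k" using nk by simp
    then have G: "GG L n k = real n * H L k" by (simp add: GG_def)
    have "real k powr (c * log 2 (real k)) = exp (c * log 2 (real k) * ln (real k))"
      using kpos by (simp add: powr_def)
    also have "c * log 2 (real k) * ln (real k) = bb * (ln (real k))^2 / 4"
      by (simp add: c_def log_def power2_eq_square)
    also have "exp (bb * (ln (real k))^2 / 4) \<le> H L k" by (rule H_lower[OF L kL])
    finally have "real n * real k powr (c * log 2 (real k)) \<le> real n * H L k"
      by (intro mult_left_mono) auto
    also have "\<dots> \<le> real (rpn (binomial_lang n k))" using rpn_lower[OF L AFall, of k n] nk G by simp
    finally show ?thesis .
  qed
  show ?thesis using cpos main by blast
qed


end
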